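(* Fix $\beta\in(0,1)$ and $r>\beta$. Consider the following normal model. Let $m=\lfloor n^{1-\beta}\rfloor$, and let $\mathscr{F}\subset[n]$ be a uniformly random subset of size $m$. Set $\mu_i=\sqrt{2r\log n}$ for $i\in\mathscr{F}$ and $\mu_i=0$ otherwise. Let $X_i\sim\mathcal{N}(\mu_i,1)$ be independent. Let $q=q_n\in(0,1)$ satisfy $q_n\to0$ and $n^a q_n\to\infty$ for every fixed $a>0$. Then the Barber–Candès procedure at level $q_n$ has risk $\mathrm{FDR}+\mathrm{FNR}$ tending to $0$ as $n\to\infty$.
   Context: For a rejection set $\mathscr{R}$: - $\mathrm{FDP}(\mathscr{R})=|\mathscr{R}\setminus\mathscr{F}|/|\mathscr{R}|$, - $\mathrm{FNP}(\mathscr{R})=|\mathscr{F}\setminus\mathscr{R}|/|\mathscr{F}|$, with $0/0=0$. $\mathrm{FDR}$ and $\mathrm{FNR}$ are the expectations of $\mathrm{FDP}$ and $\mathrm{FNP}$. BC procedure at level $q$: for $t\in\mathbb{R}$, define $$\widehat{\mathrm{FDP}}(t)=\frac{1+\#\{i:X_i\le -t\}}{1\vee\#\{i:X_i\ge t\}}.$$ Set $\tau_{\rm BC}=\inf\{t\in\{|X_1|,\dots,|X_n|\}:\widehat{\mathrm{FDP}}(t)\le q\}$, with $\inf\emptyset=+\infty$. The procedure rejects $\{i:X_i\ge\tau_{\rm BC}\}$. *)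

theory Defs
  imports "HOL-Probability.Probability"
begin

text \<open>Coordinates are indexed by the set {..<n} (standing for [n]).\<close>

definition FDP :: "nat set \<Rightarrow> nat set \<Rightarrow> real" where
  "FDP R F = real (card (R - F)) / real (card R)"

definition FNP :: "nat set \<Rightarrow> nat set \<Rightarrow> real" where
  "FNP R F = real (card (F - R)) / real (card F)"

definition FDP_hat :: "nat \<Rightarrow> (nat \<Rightarrow> real) \<Rightarrow> real \<Rightarrow> real" where
  "FDP_hat n X t = (1 + real (card {i \<in> {..<n}. X i \<le> - t}))
                    / max 1 (real (card {i \<in> {..<n}. X i \<ge> t}))"

definition BC_thresholds :: "nat \<Rightarrow> real \<Rightarrow> (nat \<Rightarrow> real) \<Rightarrow> real set" where
  "BC_thresholds n q X = {t \<in> (\<lambda>i. \<bar>X i\<bar>) ` {..<n}. FDP_hat n X t \<le> q}"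

text \<open>Rejection set of the Barber-Candes procedure (tau = +infinity gives no rejections).\<close>
definition BC_rej :: "nat \<Rightarrow> real \<Rightarrow> (nat \<Rightarrow> real) \<Rightarrow> nat set" where
  "BC_rej n q X = (if BC_thresholds n q X = {} then {}
      else {i \<in> {..<n}. X i \<ge> Min (BC_thresholds n q X)})"

definition n_signals :: "real \<Rightarrow> nat \<Rightarrow> nat" where
  "n_signals \<beta> n = nat \<lfloor>real n powr (1 - \<beta>)\<rfloor>"

definition signal_sets :: "real \<Rightarrow> nat \<Rightarrow> nat set set" where
  "signal_sets \<beta> n = {F. F \<subseteq> {..<n} \<and> card F = n_signals \<beta> n}"

definition means :: "real \<Rightarrow> nat \<Rightarrow> nat set \<Rightarrow> nat \<Rightarrow> real" where
  "means r n F i = (if i \<in> F then sqrt (2 * r * ln (real n)) else 0)"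

definition X_law :: "real \<Rightarrow> nat \<Rightarrow> nat set \<Rightarrow> (nat \<Rightarrow> real) measure" where
  "X_law r n F = (\<Pi>\<^sub>M i\<in>{..<n}. density lborel (normal_density (means r n F i) 1))"

definition FDR_BC :: "real \<Rightarrow> real \<Rightarrow> nat \<Rightarrow> real \<Rightarrow> real" where
  "FDR_BC \<beta> r n q = measure_pmf.expectation (pmf_of_set (signal_sets \<beta> n))
      (\<lambda>F. \<integral>X. FDP (BC_rej n q X) F \<partial>(X_law r n F))"

definition FNR_BC :: "real \<Rightarrow> real \<Rightarrow> nat \<Rightarrow> real \<Rightarrow> real" where
  "FNR_BC \<beta> r n q = measure_pmf.expectation (pmf_of_set (signal_sets \<beta> n))
      (\<lambda>F. \<integral>X. FNP (BC_rej n q X) F \<partial>(X_law r n F))"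

end

theory Submission
  imports Defs "HOL-Real_Asymp.Real_Asymp"
begin

abbreviation Nm :: "real \<Rightarrow> real measure" where "Nm \<mu> \<equiv> density lborel (normal_density \<mu> 1)"

lemma prob_Nm: "prob_space (Nm \<mu>)" by (rule prob_space_normal_density) simp

lemma sets_Nm[simp, measurable_cong]: "sets (Nm \<mu>) = sets borel" by simp

lemma emeasure_Nm: "A \<in> sets borel \<Longrightarrow> emeasure (Nm \<mu>) A = (\<integral>\<^sup>+x. ennreal (normal_density \<mu> 1 x) * indicator A x \<partial>lborel)"
  by (simp add: emeasure_density)

lemma Nm_ge_shift: "emeasure (Nm \<mu>) {a..} = emeasure (Nm 0) {a - \<mu>..}"
proof -
  have "emeasure (Nm \<mu>) {a..} = (\<integral>\<^sup>+x. ennreal (normal_density \<mu> 1 x) * indicator {a..} x \<partial>lborel)"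
    by (simp add: emeasure_Nm)
  also have "\<dots> = (\<integral>\<^sup>+y. ennreal (normal_density \<mu> 1 (\<mu> + 1 * y)) * indicator {a..} (\<mu> + 1 * y) \<partial>lborel)"
    by (subst nn_integral_real_affine[where c=1 and t=\<mu>]) auto
  also have "\<dots> = (\<integral>\<^sup>+y. ennreal (normal_density 0 1 y) * indicator {a - \<mu>..} y \<partial>lborel)"
    by (intro nn_integral_cong) (auto simp: normal_density_def indicator_def)
  also have "\<dots> = emeasure (Nm 0) {a - \<mu>..}" by (simp add: emeasure_Nm)
  finally show ?thesis .
qed

lemma Nm_le_shift: "emeasure (Nm \<mu>) {..a} = emeasure (Nm 0) {\<mu> - a..}"
proof -
  have "emeasure (Nm \<mu>) {..a} = (\<integral>\<^sup>+x. ennreal (normal_density \<mu> 1 x) * indicator {..a} x \<partial>lborel)"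
    by (simp add: emeasure_Nm)
  also have "\<dots> = (\<integral>\<^sup>+y. ennreal (normal_density \<mu> 1 (\<mu> + (-1) * y)) * indicator {..a} (\<mu> + (-1) * y) \<partial>lborel)"
    by (subst nn_integral_real_affine[where c="-1" and t=\<mu>]) auto
  also have "\<dots> = (\<integral>\<^sup>+y. ennreal (normal_density 0 1 y) * indicator {\<mu> - a..} y \<partial>lborel)"
    by (intro nn_integral_cong) (auto simp: normal_density_def indicator_def power2_commute)
  also have "\<dots> = emeasure (Nm 0) {\<mu> - a..}" by (simp add: emeasure_Nm)
  finally show ?thesis .
qed

lemma nn_integral_std: "(\<integral>\<^sup>+x. ennreal (normal_density 0 1 x) \<partial>lborel) = 1"
proof -
  interpret prob_space "Nm 0" by (rule prob_Nm)
  have "emeasure (Nm 0) UNIV = 1" using emeasure_space_1 by simp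
  then show ?thesis by (simp add: emeasure_Nm)
qed

lemma Nm_tail: assumes "t \<ge> 0" shows "emeasure (Nm 0) {t..} \<le> ennreal (exp (- t\<^sup>2 / 2))"
proof -
  have "emeasure (Nm 0) {t..} = (\<integral>\<^sup>+x. ennreal (normal_density 0 1 x) * indicator {t..} x \<partial>lborel)"
    by (simp add: emeasure_Nm)
  also have "\<dots> = (\<integral>\<^sup>+y. ennreal (normal_density 0 1 (t + 1 * y)) * indicator {t..} (t + 1 * y) \<partial>lborel)"
    by (subst nn_integral_real_affine[where c=1 and t=t]) auto
  also have "\<dots> \<le> (\<integral>\<^sup>+y. ennreal (exp (- t\<^sup>2 / 2)) * ennreal (normal_density 0 1 y) \<partial>lborel)"
  proof (intro nn_integral_mono)
    fix y :: real
    show "ennreal (normal_density 0 1 (t + 1 * y)) * indicator {t..} (t + 1 * y)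
          \<le> ennreal (exp (- t\<^sup>2 / 2)) * ennreal (normal_density 0 1 y)"
    proof (cases "y \<ge> 0")
      case True
      have "(t+y)\<^sup>2 \<ge> t\<^sup>2 + y\<^sup>2" using True assms by (simp add: power2_eq_square algebra_simps)
      then have "exp (-(t+y)\<^sup>2/2) \<le> exp (-t\<^sup>2/2) * exp (-y\<^sup>2/2)"
        by (simp add: exp_add[symmetric] divide_simps)
      then have "normal_density 0 1 (t + y) \<le> exp (- t\<^sup>2 / 2) * normal_density 0 1 y"
        by (simp add: std_normal_density_def mult.left_commute divide_simps)
      then show ?thesis by (simp add: ennreal_mult'[symmetric] indicator_def)
    qed (simp add: indicator_def)
  qed
  also have "\<dots> = ennreal (exp (- t\<^sup>2 / 2))"
    by (simp add: nn_integral_cmult nn_integral_std)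
  finally show ?thesis .
qed


definition G :: "real \<Rightarrow> real" where "G t = measure (Nm 0) {t..}"

lemma G_ge: "measure (Nm \<mu>) {a..} = G (a - \<mu>)"
  unfolding G_def measure_def Nm_ge_shift[of \<mu> a] ..

lemma G_le: "measure (Nm \<mu>) {..a} = G (\<mu> - a)"
  unfolding G_def measure_def Nm_le_shift[of \<mu> a] ..

lemma G_nonneg: "0 \<le> G t" by (simp add: G_def)

lemma G_le1: "G t \<le> 1"
proof -
  interpret prob_space "Nm 0" by (rule prob_Nm)
  show ?thesis unfolding G_def by (rule prob_le_1)
qed

lemma G_mono: "a \<le> b \<Longrightarrow> G b \<le> G a"
proof -
  assume "a \<le> b"
  interpret prob_space "Nm 0" by (rule prob_Nm)
  show ?thesis unfolding G_def using \<open>a \<le> b\<close> by (intro finite_measure_mono) auto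
qed

lemma G_tail: "t \<ge> 0 \<Longrightarrow> G t \<le> exp (- t\<^sup>2 / 2)"
proof -
  assume t: "t \<ge> 0"
  interpret prob_space "Nm 0" by (rule prob_Nm)
  have "emeasure (Nm 0) {t..} \<le> ennreal (exp (- t\<^sup>2 / 2))" by (rule Nm_tail[OF t])
  then show ?thesis unfolding G_def by (simp add: emeasure_eq_measure)
qed

lemma G_lip: assumes "a \<le> b" shows "G a \<le> G b + (b - a)"
proof -
  interpret prob_space "Nm 0" by (rule prob_Nm)
  have "emeasure (Nm 0) {a..<b} = (\<integral>\<^sup>+x. ennreal (normal_density 0 1 x) * indicator {a..<b} x \<partial>lborel)"
    by (simp add: emeasure_Nm)
  also have "\<dots> \<le> (\<integral>\<^sup>+x. indicator {a..<b} x \<partial>lborel)"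
  proof (intro nn_integral_mono)
    fix x :: real
    have "exp (- x\<^sup>2 / 2) \<le> 1" by simp
    moreover have "1 / sqrt (2 * pi) \<le> 1" using pi_gt3 by (simp add: divide_simps)
    ultimately have "(1 / sqrt (2 * pi)) * exp (- x\<^sup>2 / 2) \<le> 1 * 1"
      by (intro mult_mono) auto
    then have "normal_density 0 1 x \<le> 1"
      by (simp add: std_normal_density_def)
    then show "ennreal (normal_density 0 1 x) * indicator {a..<b} x \<le> indicator {a..<b} x"
      by (simp add: indicator_def)
  qed
  also have "\<dots> = ennreal (b - a)" using assms by simp
  finally have 1: "measure (Nm 0) {a..<b} \<le> b - a" using assms by (simp add: emeasure_eq_measure)
  have "G a = measure (Nm 0) ({a..<b} \<union> {b..})" unfolding G_def using assms
    by (intro arg_cong[where f="measure _"]) auto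
  also have "\<dots> = measure (Nm 0) {a..<b} + G b" unfolding G_def
    by (subst finite_measure_Union) auto
  finally show ?thesis using 1 by simp
qed

lemma G_cont: "continuous_on A G"
proof -
  have "1-lipschitz_on A G"
    unfolding lipschitz_on_def
  proof (intro conjI ballI)
    fix x y assume "x \<in> A" "y \<in> A"
    have "\<bar>G x - G y\<bar> \<le> \<bar>x - y\<bar>"
    proof (cases "x \<le> y")
      case True
      then show ?thesis using G_lip[of x y] G_mono[of x y] by linarith
    next
      case False
      then show ?thesis using G_lip[of y x] G_mono[of y x] by linarith
    qed
    then show "dist (G x) (G y) \<le> 1 * dist x y" by (simp add: dist_real_def)
  qed simp
  then show ?thesis by (rule lipschitz_on_continuous_on)
qed

lemma G_ivt: assumes "0 < y" "y \<le> G 0" shows "\<exists>u\<ge>0. G u = y"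
proof -
  obtain T :: real where T: "T \<ge> 0" "exp (- T\<^sup>2 / 2) \<le> y"
  proof
    have "y \<le> 1" using assms G_le1[of 0] by simp
    then have "ln (1/y) \<ge> 0" using assms by simp
    then show "sqrt (2 * ln (1/y)) \<ge> 0" by simp
    from \<open>ln (1/y) \<ge> 0\<close> show "exp (- (sqrt (2 * ln (1/y)))\<^sup>2 / 2) \<le> y"
      using assms by (simp add: exp_minus ln_div)
  qed
  have "G T \<le> y" using G_tail[OF T(1)] T(2) by simp
  have "\<exists>u. 0 \<le> u \<and> u \<le> T \<and> G u = y"
    by (rule IVT2'[of G T y 0]) (use \<open>G T \<le> y\<close> assms T G_cont in auto)
  then show ?thesis by blast
qed



lemma fpps: "finite I \<Longrightarrow> finite_product_prob_space (\<lambda>i. Nm (\<mu> i)) I"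
  unfolding finite_product_prob_space_def finite_product_sigma_finite_def
    product_prob_space_def product_prob_space_axioms_def product_sigma_finite_def
    finite_product_sigma_finite_axioms_def
  using prob_Nm prob_space_imp_sigma_finite by blast

lemma prob_PP: "finite I \<Longrightarrow> prob_space (PiM I (\<lambda>i. Nm (\<mu> i)))"
  by (rule prob_space_PiM) (rule prob_Nm)

lemma integrable_Nm_ind: "A \<in> sets borel \<Longrightarrow> integrable (Nm m) (indicator A :: real \<Rightarrow> real)"
proof -
  assume A: "A \<in> sets borel"
  interpret prob_space "Nm m" by (rule prob_Nm)
  show ?thesis using A by (intro integrable_real_indicator) (auto simp: emeasure_eq_measure)
qed

lemma measure_Nm_UNIV[simp]: "measure (Nm m) UNIV = 1"
proof -
  interpret prob_space "Nm m" by (rule prob_Nm)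
  show ?thesis using prob_space by simp
qed

lemma integral_Nm_ind: "A \<in> sets borel \<Longrightarrow> (\<integral>x. (indicator A x :: real) \<partial>Nm m) = measure (Nm m) A"
  by simp

lemma PP_single:
  fixes f :: "real \<Rightarrow> real" and I :: "nat set"
  assumes fin: "finite I" and i: "i \<in> I" and f: "integrable (Nm (\<mu> i)) f"
  shows "(\<integral>x. f (x i) \<partial>PiM I (\<lambda>i. Nm (\<mu> i))) = (\<integral>y. f y \<partial>Nm (\<mu> i))"
proof -
  interpret finite_product_prob_space "\<lambda>i. Nm (\<mu> i)" I by (rule fpps[OF fin])
  define h where "h k = (if k = i then f else (\<lambda>_. 1::real))" for k
  have 1: "(\<Prod>k\<in>I. h k (x k)) = f (x i)" for x :: "nat \<Rightarrow> real"
    using fin i by (simp add: prod.remove[of I i] h_def)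
  have 2: "(\<Prod>k\<in>I. integral\<^sup>L (Nm (\<mu> k)) (h k)) = (\<integral>y. f y \<partial>Nm (\<mu> i))"
  proof -
    have "(\<Prod>k\<in>I. integral\<^sup>L (Nm (\<mu> k)) (h k)) = integral\<^sup>L (Nm (\<mu> i)) (h i) * (\<Prod>k\<in>I-{i}. integral\<^sup>L (Nm (\<mu> k)) (h k))"
      using fin i by (simp add: prod.remove[of I i])
    also have "(\<Prod>k\<in>I-{i}. integral\<^sup>L (Nm (\<mu> k)) (h k)) = 1"
      by (intro prod.neutral) (auto simp: h_def)
    finally show ?thesis by (simp add: h_def)
  qed
  have "(\<integral>x. (\<Prod>k\<in>I. h k (x k)) \<partial>PiM I (\<lambda>i. Nm (\<mu> i))) = (\<Prod>k\<in>I. integral\<^sup>L (Nm (\<mu> k)) (h k))"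
    by (rule product_integral_prod) (use fin f in \<open>auto simp: h_def\<close>)
  then show ?thesis using 1 2 by simp
qed

lemma PP_pair:
  fixes f g :: "real \<Rightarrow> real" and I :: "nat set"
  assumes fin: "finite I" and i: "i \<in> I" and j: "j \<in> I" and ij: "i \<noteq> j"
    and f: "integrable (Nm (\<mu> i)) f" and g: "integrable (Nm (\<mu> j)) g"
  shows "(\<integral>x. f (x i) * g (x j) \<partial>PiM I (\<lambda>i. Nm (\<mu> i))) = (\<integral>y. f y \<partial>Nm (\<mu> i)) * (\<integral>y. g y \<partial>Nm (\<mu> j))"
proof -
  interpret finite_product_prob_space "\<lambda>i. Nm (\<mu> i)" I by (rule fpps[OF fin])
  define h where "h k = (if k = i then f else if k = j then g else (\<lambda>_. 1::real))" for k
  have 1: "(\<Prod>k\<in>I. h k (x k)) = f (x i) * g (x j)" for x :: "nat \<Rightarrow> real"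
  proof -
    have "(\<Prod>k\<in>I. h k (x k)) = h i (x i) * (\<Prod>k\<in>I-{i}. h k (x k))"
      using fin i by (simp add: prod.remove[of I i])
    also have "(\<Prod>k\<in>I-{i}. h k (x k)) = h j (x j) * (\<Prod>k\<in>I-{i}-{j}. h k (x k))"
      using fin i j ij by (intro prod.remove) auto
    also have "(\<Prod>k\<in>I-{i}-{j}. h k (x k)) = 1"
      by (intro prod.neutral) (auto simp: h_def)
    finally show ?thesis using ij by (simp add: h_def)
  qed
  have 2: "(\<Prod>k\<in>I. integral\<^sup>L (Nm (\<mu> k)) (h k)) = (\<integral>y. f y \<partial>Nm (\<mu> i)) * (\<integral>y. g y \<partial>Nm (\<mu> j))"
  proof -
    have "(\<Prod>k\<in>I. integral\<^sup>L (Nm (\<mu> k)) (h k)) = integral\<^sup>L (Nm (\<mu> i)) (h i) * (\<Prod>k\<in>I-{i}. integral\<^sup>L (Nm (\<mu> k)) (h k))"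
      using fin i by (simp add: prod.remove[of I i])
    also have "(\<Prod>k\<in>I-{i}. integral\<^sup>L (Nm (\<mu> k)) (h k)) = integral\<^sup>L (Nm (\<mu> j)) (h j) * (\<Prod>k\<in>I-{i}-{j}. integral\<^sup>L (Nm (\<mu> k)) (h k))"
      using fin i j ij by (intro prod.remove) auto
    also have "(\<Prod>k\<in>I-{i}-{j}. integral\<^sup>L (Nm (\<mu> k)) (h k)) = 1"
      by (intro prod.neutral) (auto simp: h_def)
    finally show ?thesis using ij by (simp add: h_def)
  qed
  have "(\<integral>x. (\<Prod>k\<in>I. h k (x k)) \<partial>PiM I (\<lambda>i. Nm (\<mu> i))) = (\<Prod>k\<in>I. integral\<^sup>L (Nm (\<mu> k)) (h k))"
    by (rule product_integral_prod) (use fin f g in \<open>auto simp: h_def\<close>)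
  then show ?thesis using 1 2 by simp
qed


lemma count_stats:
  fixes I J :: "nat set" and A :: "nat \<Rightarrow> real set" and \<mu> :: "nat \<Rightarrow> real"
  assumes fin: "finite I" and J: "J \<subseteq> I" and A: "\<And>i. A i \<in> sets borel"
  defines "P \<equiv> PiM I (\<lambda>i. Nm (\<mu> i))"
  defines "Y \<equiv> (\<lambda>x. \<Sum>i\<in>J. indicator (A i) (x i) :: real)"
  defines "e \<equiv> (\<Sum>i\<in>J. measure (Nm (\<mu> i)) (A i))"
  shows "Y \<in> borel_measurable P" "integral\<^sup>L P Y = e"
    "a > 0 \<Longrightarrow> measure P {x\<in>space P. \<bar>Y x - e\<bar> \<ge> a} \<le> e / a\<^sup>2"
proof -
  interpret finite_product_prob_space "\<lambda>i. Nm (\<mu> i)" I by (rule fpps[OF fin])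
  interpret PS: prob_space P unfolding P_def by (rule prob_PP[OF fin])
  have finJ: "finite J" using fin J finite_subset by auto
  have mi: "(\<lambda>x. indicator (A i) (x i) :: real) \<in> borel_measurable P" if "i \<in> I" for i
    unfolding P_def
    by (rule measurable_compose[OF measurable_component_singleton[OF that]]) (use A in simp)
  have ii: "integrable P (\<lambda>x. indicator (A i) (x i) :: real)" if "i \<in> I" for i
    by (rule PS.integrable_const_bound[where B=1]) (use mi[OF that] in auto)
  have iij: "integrable P (\<lambda>x. indicator (A i) (x i) * indicator (A j) (x j) :: real)" if "i \<in> I" "j \<in> I" for i j
    by (rule PS.integrable_const_bound[where B=1]) (use mi[OF that(1)] mi[OF that(2)] in \<open>auto simp: indicator_def\<close>)
  have Ei: "integral\<^sup>L P (\<lambda>x. indicator (A i) (x i) :: real) = measure (Nm (\<mu> i)) (A i)" if "i \<in> I" for i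
    unfolding P_def by (subst PP_single[OF fin that]) (auto simp: integrable_Nm_ind A)
  have Eij: "integral\<^sup>L P (\<lambda>x. indicator (A i) (x i) * indicator (A j) (x j) :: real)
     = (if i = j then measure (Nm (\<mu> i)) (A i) else measure (Nm (\<mu> i)) (A i) * measure (Nm (\<mu> j)) (A j))"
    if "i \<in> I" "j \<in> I" for i j
  proof (cases "i = j")
    case True
    have "(\<lambda>x. indicator (A i) (x i) * indicator (A j) (x j) :: real) = (\<lambda>x. indicator (A i) (x i))"
      using True by (auto simp: indicator_def)
    then show ?thesis using Ei[OF that(1)] True by simp
  next
    case False
    show ?thesis unfolding P_def
      by (subst PP_pair[OF fin that False]) (auto simp: integrable_Nm_ind A False)
  qed
  show meas: "Y \<in> borel_measurable P" unfolding Y_def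
    by (intro borel_measurable_sum mi) (use J in auto)
  have intY: "integrable P Y" unfolding Y_def
  proof (rule Bochner_Integration.integrable_sum)
    fix i assume "i \<in> J" then show "integrable P (\<lambda>x. indicator (A i) (x i) :: real)" using J ii by auto
  qed
  show EY: "integral\<^sup>L P Y = e" unfolding Y_def e_def
    by (subst Bochner_Integration.integral_sum) (use J ii Ei in \<open>auto intro!: sum.cong\<close>)
  have Y2: "(\<lambda>x. (Y x)\<^sup>2) = (\<lambda>x. \<Sum>i\<in>J. \<Sum>j\<in>J. indicator (A i) (x i) * indicator (A j) (x j) :: real)"
    unfolding Y_def by (simp add: power2_eq_square sum_product)
  have intY2: "integrable P (\<lambda>x. (Y x)\<^sup>2)" unfolding Y2
    by (intro Bochner_Integration.integrable_sum[where f="\<lambda>i x. \<Sum>j\<in>J. indicator (A i) (x i) * indicator (A j) (x j) :: real"]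
        Bochner_Integration.integrable_sum[where f="\<lambda>j x. indicator (A i) (x i) * indicator (A j) (x j) :: real" for i]) (use J iij in auto)
  have EY2: "integral\<^sup>L P (\<lambda>x. (Y x)\<^sup>2) = (\<Sum>i\<in>J. \<Sum>j\<in>J. (if i = j then measure (Nm (\<mu> i)) (A i) else measure (Nm (\<mu> i)) (A i) * measure (Nm (\<mu> j)) (A j)))"
    unfolding Y2 using J by (simp add: Bochner_Integration.integral_sum iij Eij subset_iff Bochner_Integration.integrable_sum)
  also have "\<dots> \<le> (\<Sum>i\<in>J. \<Sum>j\<in>J. measure (Nm (\<mu> i)) (A i) * measure (Nm (\<mu> j)) (A j) + (if i = j then measure (Nm (\<mu> i)) (A i) else 0))"
    by (intro sum_mono) (auto simp: measure_nonneg)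
  also have "\<dots> = e\<^sup>2 + e"
    unfolding e_def using finJ by (simp add: sum.distrib power2_eq_square sum_product)
  finally have EY2le: "integral\<^sup>L P (\<lambda>x. (Y x)\<^sup>2) \<le> e\<^sup>2 + e" .
  have var: "PS.variance Y \<le> e"
    using PS.variance_eq[OF intY intY2] EY EY2le by simp
  assume a: "a > 0"
  have "measure P {x\<in>space P. \<bar>Y x - e\<bar> \<ge> a} \<le> PS.variance Y / a\<^sup>2"
    using PS.Chebyshev_inequality[OF meas intY2 a] EY by simp
  also have "\<dots> \<le> e / a\<^sup>2" using var a by (simp add: divide_right_mono)
  finally show "measure P {x\<in>space P. \<bar>Y x - e\<bar> \<ge> a} \<le> e / a\<^sup>2" .
qed



lemma bc_det:
  fixes X :: "nat \<Rightarrow> real" and F :: "nat set" and n m :: nat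
  assumes F: "F \<subseteq> {..<n}" "card F = m" "m > 0"
    and q: "0 < q"
    and t0: "t0 \<ge> 0"
    and H1: "real (card {i\<in>{..<n}. X i \<le> - t0}) + 1 \<le> q * real (card {i\<in>F. X i \<ge> t0})"
    and H2: "real m \<le> 2 * real (card {i\<in>F. X i \<ge> t0})"
    and H3: "\<And>t. t \<ge> 0 \<Longrightarrow> real (card {i\<in>{..<n}-F. X i \<ge> t}) \<le> 2 * real (card {i\<in>{..<n}-F. X i \<le> - t}) + e"
    and e: "e \<ge> 0"
  shows "FNP (BC_rej n q X) F \<le> real (card {i\<in>F. X i < t0}) / m"
    and "FDP (BC_rej n q X) F \<le> 2*q + 2*e/m"
proof -
  define S0 where "S0 = {i\<in>F. X i \<ge> t0}"
  define Rp where "Rp t = card {i\<in>{..<n}. X i \<ge> t}" for t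
  define Rm where "Rm t = card {i\<in>{..<n}. X i \<le> - t}" for t
  have finF: "finite F" using F finite_subset by blast
  have S0ne: "card S0 \<ge> 1"
  proof (rule ccontr)
    assume "\<not> card S0 \<ge> 1"
    then have "card S0 = 0" by simp
    then show False using H1 unfolding S0_def by simp
  qed
  have S0Rp: "card S0 \<le> Rp t0" unfolding S0_def Rp_def
    by (intro card_mono) (use F in auto)
  define T where "T = (\<lambda>i. \<bar>X i\<bar>) ` {i\<in>{..<n}. \<bar>X i\<bar> \<ge> t0}"
  have finT: "finite T" unfolding T_def by simp
  obtain i0 where i0: "i0 \<in> S0" using S0ne by (metis card.empty not_one_le_zero equals0I)
  have i0n: "i0 < n" "X i0 \<ge> t0" using i0 F unfolding S0_def by auto
  have Tne: "T \<noteq> {}" unfolding T_def using i0n t0 by auto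
  define t' where "t' = Min T"
  have t'T: "t' \<in> T" unfolding t'_def using finT Tne by simp
  have t'ge: "t' \<ge> t0" using t'T unfolding T_def by auto
  have t'le: "t' \<le> X i" if "i < n" "X i \<ge> t0" for i
  proof -
    have "X i \<in> T" unfolding T_def using that t0 by (intro image_eqI[of _ _ i]) auto
    then show ?thesis unfolding t'_def using finT by simp
  qed
  have Rpt': "Rp t' = Rp t0" unfolding Rp_def
    by (rule arg_cong[where f=card]) (use t'le t'ge in force)
  have Rmt': "Rm t' \<le> Rm t0" unfolding Rm_def
    by (intro card_mono) (use t'ge in auto)
  define BC where "BC = BC_thresholds n q X"
  have fdph: "FDP_hat n X t = (1 + real (Rm t)) / max 1 (real (Rp t))" for t
    unfolding FDP_hat_def Rm_def Rp_def by simp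
  have Rp0pos: "real (Rp t0) \<ge> 1" using S0ne S0Rp by simp
  have "FDP_hat n X t' \<le> q"
  proof -
    have "FDP_hat n X t' = (1 + real (Rm t')) / real (Rp t0)"
      using Rp0pos by (simp add: fdph Rpt' max_def)
    also have "\<dots> \<le> (1 + real (Rm t0)) / real (Rp t0)"
      using Rmt' Rp0pos by (intro divide_right_mono) auto
    also have "\<dots> \<le> q * real (card S0) / real (Rp t0)"
      using H1 Rp0pos unfolding Rm_def S0_def by (intro divide_right_mono) auto
    also have "\<dots> \<le> q"
      using S0Rp Rp0pos q by (simp add: divide_simps)
    finally show ?thesis .
  qed
  moreover have "t' \<in> (\<lambda>i. \<bar>X i\<bar>) ` {..<n}" using t'T unfolding T_def by auto
  ultimately have t'BC: "t' \<in> BC" unfolding BC_def BC_thresholds_def by simp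
  have finBC: "finite BC" unfolding BC_def BC_thresholds_def by simp
  define \<tau> where "\<tau> = Min BC"
  have \<tau>BC: "\<tau> \<in> BC" unfolding \<tau>_def using finBC t'BC by (intro Min_in) auto
  have \<tau>le: "\<tau> \<le> t'" unfolding \<tau>_def using finBC t'BC by simp
  have \<tau>ge0: "\<tau> \<ge> 0" using \<tau>BC unfolding BC_def BC_thresholds_def by auto
  have \<tau>q: "FDP_hat n X \<tau> \<le> q" using \<tau>BC unfolding BC_def BC_thresholds_def by auto
  define R where "R = BC_rej n q X"
  have R: "R = {i\<in>{..<n}. X i \<ge> \<tau>}" unfolding R_def BC_rej_def \<tau>_def BC_def[symmetric]
    using t'BC by auto
  have supR: "{i\<in>{..<n}. X i \<ge> t0} \<subseteq> R" unfolding R using t'le \<tau>le by force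
  have finR: "finite R" unfolding R by simp
  show "FNP (BC_rej n q X) F \<le> real (card {i\<in>F. X i < t0}) / m"
  proof -
    have "F - R \<subseteq> {i\<in>F. X i < t0}" using supR F by force
    then have "card (F - R) \<le> card {i\<in>F. X i < t0}" using finF by (intro card_mono) auto
    then show ?thesis unfolding FNP_def R_def[symmetric] using F by (simp add: divide_right_mono)
  qed
  have RpR: "card R = Rp \<tau>" unfolding R Rp_def ..
  have "card {i\<in>{..<n}. X i \<ge> t0} \<le> card R" using supR finR by (rule card_mono[rotated])
  then have Rptau: "card S0 \<le> Rp \<tau>" using S0Rp RpR unfolding Rp_def by linarith
  then have Rptau1: "real (Rp \<tau>) \<ge> 1" using S0ne by simp
  have "(1 + real (Rm \<tau>)) / real (Rp \<tau>) \<le> q" using \<tau>q Rptau1 by (simp add: fdph max_def)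
  then have Rmq: "real (Rm \<tau>) \<le> q * real (Rp \<tau>)" using Rptau1 by (simp add: divide_simps)
  have "card (R - F) = card {i\<in>{..<n}-F. X i \<ge> \<tau>}" unfolding R by (rule arg_cong[where f=card]) auto
  also have "real \<dots> \<le> 2 * real (card {i\<in>{..<n}-F. X i \<le> - \<tau>}) + e" by (rule H3[OF \<tau>ge0])
  also have "card {i\<in>{..<n}-F. X i \<le> - \<tau>} \<le> Rm \<tau>" unfolding Rm_def by (intro card_mono) auto
  finally have RF: "real (card (R - F)) \<le> 2 * q * real (Rp \<tau>) + e" using Rmq by linarith
  have mRp: "real m \<le> 2 * real (Rp \<tau>)" using H2 Rptau unfolding S0_def by linarith
  have "FDP R F = real (card (R - F)) / real (Rp \<tau>)" unfolding FDP_def RpR ..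
  also have "\<dots> \<le> (2 * q * real (Rp \<tau>) + e) / real (Rp \<tau>)" using RF Rptau1 by (intro divide_right_mono) auto
  also have "\<dots> = 2 * q + e / real (Rp \<tau>)" using Rptau1 by (simp add: divide_simps)
  also have "e / real (Rp \<tau>) \<le> 2 * e / m"
  proof -
    have "e * real m \<le> e * (2 * real (Rp \<tau>))" using mRp e by (rule mult_left_mono)
    then show ?thesis using F Rptau1 by (simp add: divide_simps algebra_simps)
  qed
  finally show "FDP (BC_rej n q X) F \<le> 2*q + 2*e/m" unfolding R_def by simp
qed


lemma card_ind:
  fixes x :: "nat \<Rightarrow> real"
  assumes "finite J"
  shows "real (card {i\<in>J. x i \<in> A}) = (\<Sum>i\<in>J. indicator A (x i))"
proof -
  have "real (card {i\<in>J. x i \<in> A}) = (\<Sum>i\<in>{i\<in>J. x i \<in> A}. 1)" by simp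
  also have "\<dots> = (\<Sum>i\<in>J. if x i \<in> A then 1 else 0)" by (rule sum.inter_filter[OF assms])
  also have "\<dots> = (\<Sum>i\<in>J. indicator A (x i))" by (intro sum.cong) (auto simp: indicator_def)
  finally show ?thesis .
qed

lemma grid_det:
  fixes V W :: "real \<Rightarrow> real" and u c :: "nat \<Rightarrow> real" and K :: nat and d :: real
  assumes Vmono: "\<And>s t. s \<le> t \<Longrightarrow> V t \<le> V s"
    and Wmono: "\<And>s t. s \<le> t \<Longrightarrow> W t \<le> W s"
    and W0: "\<And>t. W t \<ge> 0"
    and u0: "u 0 = 0"
    and cstep: "\<And>k. k < K \<Longrightarrow> c k \<le> 3/2 * c (Suc k)"
    and cK: "c K \<le> 2 * d" and c0: "\<And>k. c k \<ge> 0"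
    and Vb: "\<And>k. k \<le> K \<Longrightarrow> V (u k) \<le> 9/8 * c k + d"
    and Wb: "\<And>k. k \<le> K \<Longrightarrow> W (u k) \<ge> 7/8 * c k - d"
    and t: "t \<ge> 0" and d: "d \<ge> 0"
  shows "V t \<le> 2 * W t + 4 * d"
proof -
  define S where "S = {k. k \<le> K \<and> u k \<le> t}"
  have finS: "finite S" unfolding S_def by simp
  have "0 \<in> S" unfolding S_def using u0 t by simp
  define k where "k = Max S"
  have kS: "k \<in> S" unfolding k_def using finS \<open>0 \<in> S\<close> by (intro Max_in) auto
  have kK: "k \<le> K" and ukt: "u k \<le> t" using kS unfolding S_def by auto
  have Vt: "V t \<le> 9/8 * c k + d" using Vmono[OF ukt] Vb[OF kK] by linarith
  show ?thesis
  proof (cases "k = K")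
    case True
    then show ?thesis using Vt cK W0[of t] d by simp
  next
    case False
    then have k1: "Suc k \<le> K" using kK by simp
    have "Suc k \<notin> S" using finS k_def by (metis Max_ge Suc_n_not_le_n)
    then have "t < u (Suc k)" using k1 unfolding S_def by auto
    then have "W (u (Suc k)) \<le> W t" using Wmono by simp
    then have "W t \<ge> 7/8 * c (Suc k) - d" using Wb[OF k1] by linarith
    moreover have "c k \<le> 3/2 * c (Suc k)" using cstep k1 by simp
    ultimately show ?thesis using Vt c0[of "Suc k"] d by linarith
  qed
qed



lemma dev_sets: fixes f :: "'a \<Rightarrow> real" assumes [measurable]: "f \<in> borel_measurable M"
  shows "{x\<in>space M. a \<le> \<bar>f x - e\<bar>} \<in> sets M"
  by measurable

lemma aux_cd: fixes c d :: real assumes "c \<ge> 0" "d > 0" shows "c / (c/8 + d)\<^sup>2 \<le> 2 / d"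
proof (cases "c = 0")
  case True then show ?thesis using assms by simp
next
  case False
  then have cpos: "c > 0" using assms by simp
  have "(c/8 + d)\<^sup>2 \<ge> c * d / 2"
  proof -
    have "(c/8 + d)\<^sup>2 - c * d / 2 = (c/8 - d)\<^sup>2" by (simp add: power2_eq_square algebra_simps)
    then show ?thesis by (metis diff_ge_0_iff_ge zero_le_power2)
  qed
  then have "c / (c/8 + d)\<^sup>2 \<le> c / (c * d / 2)"
    using cpos assms by (intro divide_left_mono) auto
  also have "\<dots> = 2 / d" using cpos by (simp add: field_simps)
  finally show ?thesis .
qed

lemma FDP_le1: "finite R \<Longrightarrow> FDP R F \<le> 1"
  unfolding FDP_def by (cases "card R = 0") (auto simp: divide_simps card_mono)

lemma FNP_le1: "finite F \<Longrightarrow> FNP R F \<le> 1"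
  unfolding FNP_def by (cases "card F = 0") (auto simp: divide_simps card_mono)

lemma FDP_ge0: "FDP R F \<ge> 0" unfolding FDP_def by simp
lemma FNP_ge0: "FNP R F \<ge> 0" unfolding FNP_def by simp

lemma finite_BC_rej: "finite (BC_rej n q X)" unfolding BC_rej_def by auto


lemma grid_exists:
  fixes y :: real assumes "0 \<le> y" "y \<le> G 0" "y = 0 \<longrightarrow> G 0 = 0"
  shows "\<exists>u\<ge>0. G u = y"
proof (cases "y = 0")
  case True then show ?thesis using assms by (intro exI[of _ 0]) auto
next
  case False then show ?thesis using assms G_ivt by auto
qed

lemma core:
  fixes n m K :: nat and F :: "nat set" and \<mu> :: "nat \<Rightarrow> real" and q t0 \<mu>0 \<epsilon> :: real
  assumes F: "F \<subseteq> {..<n}" "card F = m" "m > 0"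
    and h\<mu>: "\<And>i. \<mu> i = (if i \<in> F then \<mu>0 else 0)"
    and q: "0 < q" and t0: "0 \<le> t0" "t0 \<le> \<mu>0"
    and hp: "G (\<mu>0 - t0) \<le> 1/4"
    and hG: "real n * G t0 \<le> q * m / 8"
    and hqm: "8 \<le> q * m"
    and \<epsilon>: "\<epsilon> > 0"
    and hK: "real n * (2/3)^K \<le> \<epsilon> * m / 4"
  defines "P \<equiv> PiM {..<n} (\<lambda>i. Nm (\<mu> i))"
  defines "Pb \<equiv> 16 * G (\<mu>0 - t0) / m + 8 / (q * m) + 32 * (real K + 1) / (\<epsilon> * m)"
  shows "(\<integral>x. FDP (BC_rej n q x) F \<partial>P) \<le> 2*q + \<epsilon> + Pb"
    and "(\<integral>x. FNP (BC_rej n q x) F \<partial>P) \<le> G (\<mu>0 - t0) + Pb"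
proof -
  interpret PS: prob_space P unfolding P_def by (rule prob_PP) simp
  define I where "I = {..<n}"
  define N0 where "N0 = I - F"
  define p where "p = G (\<mu>0 - t0)"
  have finF: "finite F" using F finite_subset by blast
  have mpos: "real m > 0" using F by simp
  have \<mu>0: "\<mu>0 \<ge> 0" using t0 by simp
  have \<mu>F: "\<mu> i = \<mu>0" if "i \<in> F" for i using h\<mu> that by simp
  have \<mu>N: "\<mu> i = 0" if "i \<in> N0" for i using h\<mu> that unfolding N0_def by simp
  have \<mu>nn: "\<mu> i \<ge> 0" for i using h\<mu> \<mu>0 by simp
  define Z where "Z x = (\<Sum>i\<in>F. indicator {..<t0} (x i) :: real)" for x :: "nat \<Rightarrow> real"
  define eZ where "eZ = (\<Sum>i\<in>F. measure (Nm (\<mu> i)) {..<t0})"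
  note csZ = count_stats[where I="{..<n}" and J=F and A="\<lambda>_. {..<t0}" and \<mu>=\<mu>, folded P_def, unfolded Z_def[symmetric] eZ_def[symmetric]]
  have Zmeas: "Z \<in> borel_measurable P" using csZ F by simp
  have EZ: "integral\<^sup>L P Z = eZ" using csZ F by simp
  have eZle: "eZ \<le> m * p"
  proof -
    have "measure (Nm (\<mu> i)) {..<t0} \<le> p" if "i \<in> F" for i
    proof -
      interpret prob_space "Nm (\<mu> i)" by (rule prob_Nm)
      have "measure (Nm (\<mu> i)) {..<t0} \<le> measure (Nm (\<mu> i)) {..t0}" by (intro finite_measure_mono) auto
      also have "\<dots> = p" unfolding p_def G_le \<mu>F[OF that] ..
      finally show ?thesis .
    qed
    then have "eZ \<le> (\<Sum>i\<in>F. p)" unfolding eZ_def by (intro sum_mono) auto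
    then show ?thesis using F by simp
  qed
  have eZ0: "eZ \<ge> 0" unfolding eZ_def by (simp add: sum_nonneg)
  define B1 where "B1 = {x\<in>space P. m/4 \<le> \<bar>Z x - eZ\<bar>}"
  have B1s: "B1 \<in> sets P" unfolding B1_def using Zmeas by (rule dev_sets)
  have PB1: "measure P B1 \<le> 16 * p / m"
  proof -
    have cz3: "\<And>a. a > 0 \<Longrightarrow> measure P {x\<in>space P. a \<le> \<bar>Z x - eZ\<bar>} \<le> eZ/a\<^sup>2" using csZ F by simp
    have "measure P B1 \<le> eZ / (m/4)\<^sup>2" unfolding B1_def by (rule cz3) (use mpos in simp)
    also have "\<dots> \<le> (m * p) / (m/4)\<^sup>2" using eZle by (intro divide_right_mono) auto
    also have "\<dots> = 16 * p / m" using mpos by (simp add: power2_eq_square field_simps)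
    finally show ?thesis .
  qed
  define Y where "Y x = (\<Sum>i\<in>I. indicator {..-t0} (x i) :: real)" for x :: "nat \<Rightarrow> real"
  define eY where "eY = (\<Sum>i\<in>I. measure (Nm (\<mu> i)) {..-t0})"
  note csY = count_stats[where I="{..<n}" and J=I and A="\<lambda>_. {..-t0}" and \<mu>=\<mu>, folded P_def, unfolded Y_def[symmetric] eY_def[symmetric]]
  have Ymeas: "Y \<in> borel_measurable P" using csY unfolding I_def by simp
  have eYle: "eY \<le> q * m / 8"
  proof -
    have "measure (Nm (\<mu> i)) {..-t0} \<le> G t0" for i
      unfolding G_le using \<mu>nn[of i] by (intro G_mono) simp
    then have "eY \<le> (\<Sum>i\<in>I. G t0)" unfolding eY_def by (intro sum_mono) auto
    then show ?thesis using hG unfolding I_def by simp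
  qed
  have eY0: "eY \<ge> 0" unfolding eY_def by (simp add: sum_nonneg)
  define B2 where "B2 = {x\<in>space P. q*m/8 \<le> \<bar>Y x - eY\<bar>}"
  have B2s: "B2 \<in> sets P" unfolding B2_def using Ymeas by (rule dev_sets)
  have PB2: "measure P B2 \<le> 8 / (q * m)"
  proof -
    have qm: "q * m > 0" using q mpos by simp
    have cy3: "\<And>a. a > 0 \<Longrightarrow> measure P {x\<in>space P. a \<le> \<bar>Y x - eY\<bar>} \<le> eY/a\<^sup>2" using csY unfolding I_def by simp
    have "measure P B2 \<le> eY / (q*m/8)\<^sup>2" unfolding B2_def by (rule cy3) (use qm in simp)
    also have "\<dots> \<le> (q*m/8) / (q*m/8)\<^sup>2" using eYle by (intro divide_right_mono) auto
    also have "\<dots> = 8 / (q * m)" using qm by (simp add: power2_eq_square field_simps)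
    finally show ?thesis .
  qed
  define d where "d = \<epsilon> * m / 8"
  have dpos: "d > 0" unfolding d_def using \<epsilon> mpos by simp
  define g0 where "g0 = G 0"
  have g0: "0 \<le> g0" "g0 \<le> 1" unfolding g0_def using G_nonneg G_le1 by auto
  define y where "y k = g0 * (2/3)^k" for k :: nat
  have yex: "\<exists>u\<ge>0. G u = y k" for k
    by (rule grid_exists) (use g0 in \<open>auto simp: y_def g0_def power_le_one mult_left_le\<close>)
  define u where "u k = (if k = 0 then 0 else SOME u. u \<ge> 0 \<and> G u = y k)" for k
  have u0: "u 0 = 0" unfolding u_def by simp
  have Gu: "G (u k) = y k" for k
  proof (cases "k = 0")
    case True then show ?thesis unfolding u_def y_def g0_def by simp
  next
    case False then show ?thesis unfolding u_def using someI_ex[OF yex[of k]] by simp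
  qed
  define Nn where "Nn = real (card N0)"
  have Nn: "0 \<le> Nn" "Nn \<le> n" unfolding Nn_def N0_def I_def
    using card_mono[of "{..<n}" "{..<n} - F"] by auto
  define c where "c k = Nn * y k" for k
  have c0: "c k \<ge> 0" for k unfolding c_def y_def using Nn g0 by simp
  have cstep: "c k \<le> 3/2 * c (Suc k)" for k unfolding c_def y_def by simp
  have cK: "c K \<le> 2 * d"
  proof -
    have "Nn * g0 \<le> real n * 1" using Nn g0 by (intro mult_mono) auto
    then have "(Nn * g0) * (2/3)^K \<le> real n * (2/3)^K" by (intro mult_right_mono) auto
    then have "c K \<le> real n * (2/3)^K" unfolding c_def y_def by (simp add: mult.assoc)
    then show ?thesis using hK unfolding d_def by simp
  qed
  define Vf where "Vf k x = (\<Sum>i\<in>N0. indicator {u k..} (x i) :: real)" for k and x :: "nat \<Rightarrow> real"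
  define Wf where "Wf k x = (\<Sum>i\<in>N0. indicator {..- u k} (x i) :: real)" for k and x :: "nat \<Rightarrow> real"
  have N0I: "N0 \<subseteq> {..<n}" unfolding N0_def I_def by auto
  have eV: "(\<Sum>i\<in>N0. measure (Nm (\<mu> i)) {u k..}) = c k" for k
  proof -
    have "(\<Sum>i\<in>N0. measure (Nm (\<mu> i)) {u k..}) = (\<Sum>i\<in>N0. y k)"
      by (intro sum.cong) (auto simp: \<mu>N G_ge Gu)
    then show ?thesis unfolding c_def Nn_def by simp
  qed
  have eW: "(\<Sum>i\<in>N0. measure (Nm (\<mu> i)) {..- u k}) = c k" for k
  proof -
    have "(\<Sum>i\<in>N0. measure (Nm (\<mu> i)) {..- u k}) = (\<Sum>i\<in>N0. y k)"
      by (intro sum.cong) (auto simp: \<mu>N G_le Gu)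
    then show ?thesis unfolding c_def Nn_def by simp
  qed
  define BV where "BV k = {x\<in>space P. c k/8 + d \<le> \<bar>Vf k x - c k\<bar>}" for k
  define BW where "BW k = {x\<in>space P. c k/8 + d \<le> \<bar>Wf k x - c k\<bar>}" for k
  have BVs: "BV k \<in> sets P" for k unfolding BV_def Vf_def
    by (rule dev_sets) (use count_stats[where I="{..<n}" and J=N0 and A="\<lambda>_. {u k..}" and \<mu>=\<mu>, folded P_def] N0I in simp)
  have BWs: "BW k \<in> sets P" for k unfolding BW_def Wf_def
    by (rule dev_sets) (use count_stats[where I="{..<n}" and J=N0 and A="\<lambda>_. {..- u k}" and \<mu>=\<mu>, folded P_def] N0I in simp)
  have PBV: "measure P (BV k) \<le> 2 / d" for k
  proof -
    have a: "c k/8 + d > 0" using c0[of k] dpos by simp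
    have "measure P (BV k) \<le> c k / (c k/8 + d)\<^sup>2"
      unfolding BV_def Vf_def using count_stats[where I="{..<n}" and J=N0 and A="\<lambda>_. {u k..}" and \<mu>=\<mu>, folded P_def] N0I a eV[of k] by simp
    also have "\<dots> \<le> 2 / d" by (rule aux_cd[OF c0 dpos])
    finally show ?thesis .
  qed
  have PBW: "measure P (BW k) \<le> 2 / d" for k
  proof -
    have a: "c k/8 + d > 0" using c0[of k] dpos by simp
    have "measure P (BW k) \<le> c k / (c k/8 + d)\<^sup>2"
      unfolding BW_def Wf_def using count_stats[where I="{..<n}" and J=N0 and A="\<lambda>_. {..- u k}" and \<mu>=\<mu>, folded P_def] N0I a eW[of k] by simp
    also have "\<dots> \<le> 2 / d" by (rule aux_cd[OF c0 dpos])
    finally show ?thesis .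
  qed
  define B where "B = B1 \<union> B2 \<union> (\<Union>k\<in>{..K}. BV k \<union> BW k)"
  have Bs: "B \<in> sets P" unfolding B_def using B1s B2s BVs BWs by auto
  have PB: "measure P B \<le> Pb"
  proof -
    have "measure P B \<le> measure P (B1 \<union> B2) + measure P (\<Union>k\<in>{..K}. BV k \<union> BW k)"
      unfolding B_def using B1s B2s BVs BWs by (intro measure_Un_le) auto
    also have "measure P (B1 \<union> B2) \<le> measure P B1 + measure P B2"
      using B1s B2s by (rule measure_Un_le)
    also have "measure P (\<Union>k\<in>{..K}. BV k \<union> BW k) \<le> (\<Sum>k\<in>{..K}. measure P (BV k \<union> BW k))"
      using BVs BWs by (intro measure_UNION_le) auto
    also have "\<dots> \<le> (\<Sum>k\<in>{..K}. 4 / d)"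
    proof (intro sum_mono)
      fix k
      have "measure P (BV k \<union> BW k) \<le> measure P (BV k) + measure P (BW k)"
        using BVs BWs by (rule measure_Un_le)
      then show "measure P (BV k \<union> BW k) \<le> 4 / d" using PBV[of k] PBW[of k] by simp
    qed
    also have "\<dots> = (real K + 1) * (4 / d)" by simp
    also have "\<dots> = 32 * (real K + 1) / (\<epsilon> * m)" unfolding d_def using \<epsilon> mpos by (simp add: field_simps)
    finally show ?thesis using PB1 PB2 unfolding Pb_def p_def by linarith
  qed
  have good: "FDP (BC_rej n q x) F \<le> 2*q + \<epsilon> \<and> FNP (BC_rej n q x) F \<le> Z x / m"
    if x: "x \<in> space P" "x \<notin> B" for x
  proof -
    have nB1: "x \<notin> B1" and nB2: "x \<notin> B2" and nBV: "\<And>k. k \<le> K \<Longrightarrow> x \<notin> BV k"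
      and nBW: "\<And>k. k \<le> K \<Longrightarrow> x \<notin> BW k" using x unfolding B_def by auto
    have "m * p \<le> m * (1/4)" using hp mpos unfolding p_def by (intro mult_left_mono) auto
    moreover have "\<bar>Z x - eZ\<bar> < m/4" using nB1 x unfolding B1_def by auto
    then have "Z x < eZ + m/4" unfolding abs_less_iff by linarith
    ultimately have Zx: "Z x < m/2" using eZle by simp
    have Zc: "real (card {i\<in>F. x i < t0}) = Z x"
      unfolding Z_def using card_ind[OF finF, of x "{..<t0}"] by simp
    have Fsplit: "real m = real (card {i\<in>F. x i \<ge> t0}) + real (card {i\<in>F. x i < t0})"
    proof -
      have "F = {i\<in>F. x i \<ge> t0} \<union> {i\<in>F. x i < t0}" by auto
      moreover have "card ({i\<in>F. x i \<ge> t0} \<union> {i\<in>F. x i < t0}) = card {i\<in>F. x i \<ge> t0} + card {i\<in>F. x i < t0}"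
        by (rule card_Un_disjoint) (use finF in auto)
      ultimately have "card F = card {i\<in>F. x i \<ge> t0} + card {i\<in>F. x i < t0}" by simp
      then show ?thesis using F by simp
    qed
    have H2: "real m \<le> 2 * real (card {i\<in>F. x i \<ge> t0})" using Fsplit Zc Zx by simp
    have "\<bar>Y x - eY\<bar> < q*m/8" using nB2 x unfolding B2_def by auto
    then have Yx: "Y x < q*m/4" using eYle unfolding abs_less_iff by linarith
    have Yc: "real (card {i\<in>{..<n}. x i \<le> - t0}) = Y x"
      unfolding Y_def I_def using card_ind[of "{..<n}" x "{..-t0}"] by simp
    have H1: "real (card {i\<in>{..<n}. x i \<le> - t0}) + 1 \<le> q * real (card {i\<in>F. x i \<ge> t0})"
    proof -
      have "q * real m \<le> q * (2 * real (card {i\<in>F. x i \<ge> t0}))" using H2 q by (intro mult_left_mono) auto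
      then show ?thesis using Yc Yx hqm by simp
    qed
    define V where "V t = real (card {i\<in>N0. x i \<ge> t})" for t
    define W where "W t = real (card {i\<in>N0. x i \<le> - t})" for t
    have finN0: "finite N0" unfolding N0_def I_def by simp
    have Vk: "V (u k) = Vf k x" for k unfolding V_def Vf_def using card_ind[OF finN0, of x "{u k..}"] by simp
    have Wk: "W (u k) = Wf k x" for k unfolding W_def Wf_def using card_ind[OF finN0, of x "{..- u k}"] by simp
    have H3: "real (card {i\<in>{..<n}-F. x i \<ge> t}) \<le> 2 * real (card {i\<in>{..<n}-F. x i \<le> - t}) + 4 * d"
      if t: "t \<ge> 0" for t
    proof -
      have "V t \<le> 2 * W t + 4 * d"
      proof (rule grid_det[where u=u and c=c and K=K and V=V and W=W and t=t and d=d])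
        show "V t \<le> V s" if "s \<le> t" for s t
          unfolding V_def using that finN0 by (intro of_nat_mono card_mono) auto
        show "W t \<le> W s" if "s \<le> t" for s t
          unfolding W_def using that finN0 by (intro of_nat_mono card_mono) auto
        show "V (u k) \<le> 9/8 * c k + d" if "k \<le> K" for k
          using nBV[OF that] x unfolding BV_def Vk by auto
        show "W (u k) \<ge> 7/8 * c k - d" if "k \<le> K" for k
          using nBW[OF that] x unfolding BW_def Wk by auto
      qed (use u0 cstep cK c0 t dpos W_def in auto)
      then show ?thesis unfolding V_def W_def N0_def I_def .
    qed
    have "4 * d \<ge> 0" using dpos by simp
    note bc = bc_det[OF F q t0(1) H1 H2 H3 this]
    have "2 * (4 * d) / real m = \<epsilon>" unfolding d_def using mpos by simp
    then show ?thesis using bc Zc by simp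
  qed
  have FDPb: "FDP (BC_rej n q x) F \<le> (2*q + \<epsilon>) + indicator B x" if "x \<in> space P" for x
  proof (cases "x \<in> B")
    case True
    then show ?thesis using FDP_le1[OF finite_BC_rej, of n q x F] q \<epsilon> by simp
  next
    case False
    then show ?thesis using good[OF that False] by simp
  qed
  have FNPb: "FNP (BC_rej n q x) F \<le> Z x / m + indicator B x" if "x \<in> space P" for x
  proof (cases "x \<in> B")
    case True
    have "Z x \<ge> 0" unfolding Z_def by (simp add: sum_nonneg)
    then have "Z x / m \<ge> 0" using mpos by simp
    then show ?thesis using True FNP_le1[OF finF, of "BC_rej n q x"] by simp
  next
    case False
    then show ?thesis using good[OF that False] by simp
  qed
  have intB: "integrable P (indicator B :: _ \<Rightarrow> real)" using Bs by (simp add: PS.emeasure_eq_measure)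
  have Zbd: "norm (Z x) \<le> real m" for x
  proof -
    have "Z x \<le> (\<Sum>i\<in>F. 1)" unfolding Z_def by (intro sum_mono) (auto simp: indicator_def)
    moreover have "Z x \<ge> 0" unfolding Z_def by (simp add: sum_nonneg)
    ultimately show ?thesis using F by simp
  qed
  have intZ: "integrable P Z"
    by (rule PS.integrable_const_bound[where B="real m"]) (use Zbd Zmeas in auto)
  show "(\<integral>x. FDP (BC_rej n q x) F \<partial>P) \<le> 2*q + \<epsilon> + Pb"
  proof (cases "integrable P (\<lambda>x. FDP (BC_rej n q x) F)")
    case True
    have "(\<integral>x. FDP (BC_rej n q x) F \<partial>P) \<le> (\<integral>x. (2*q + \<epsilon>) + indicator B x \<partial>P)"
      by (rule integral_mono[OF True]) (use intB FDPb in auto)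
    also have "\<dots> = (2*q + \<epsilon>) + measure P B" using intB Bs by (simp add: PS.prob_space)
    finally show ?thesis using PB by simp
  next
    case False
    have "Pb \<ge> 0" unfolding Pb_def using G_nonneg q \<epsilon> mpos by simp
    then show ?thesis using not_integrable_integral_eq[OF False] q \<epsilon> by simp
  qed
  show "(\<integral>x. FNP (BC_rej n q x) F \<partial>P) \<le> G (\<mu>0 - t0) + Pb"
  proof (cases "integrable P (\<lambda>x. FNP (BC_rej n q x) F)")
    case True
    have "(\<integral>x. FNP (BC_rej n q x) F \<partial>P) \<le> (\<integral>x. Z x / m + indicator B x \<partial>P)"
      by (rule integral_mono[OF True]) (use intB intZ FNPb in auto)
    also have "\<dots> = eZ / m + measure P B" using intB intZ Bs EZ by simp
    also have "eZ / m \<le> p" using eZle mpos by (simp add: divide_simps mult.commute)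
    finally show ?thesis using PB unfolding p_def by simp
  next
    case False
    have "Pb \<ge> 0" unfolding Pb_def using G_nonneg q \<epsilon> mpos by simp
    then show ?thesis using not_integrable_integral_eq[OF False] G_nonneg[of "\<mu>0 - t0"] by simp
  qed
qed



lemma pmf_exp_le:
  fixes f :: "nat set \<Rightarrow> real"
  assumes "finite S" "S \<noteq> {}" "\<And>F. F \<in> S \<Longrightarrow> f F \<le> b"
  shows "measure_pmf.expectation (pmf_of_set S) f \<le> b"
proof -
  have "measure_pmf.expectation (pmf_of_set S) f = sum f S / card S"
    using assms by (simp add: integral_pmf_of_set)
  also have "sum f S \<le> (\<Sum>F\<in>S. b)" using assms by (intro sum_mono) auto
  then have "sum f S / card S \<le> (card S * b) / card S" using assms by (intro divide_right_mono) auto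
  also have "\<dots> = b" using assms by simp
  finally show ?thesis by simp
qed

lemma pmf_exp_ge0:
  fixes f :: "nat set \<Rightarrow> real"
  assumes "finite S" "S \<noteq> {}" "\<And>F. F \<in> S \<Longrightarrow> f F \<ge> 0"
  shows "measure_pmf.expectation (pmf_of_set S) f \<ge> 0"
  using assms by (simp add: integral_pmf_of_set sum_nonneg)

lemma signal_sets_ok:
  assumes "n_signals \<beta> n \<le> n"
  shows "finite (signal_sets \<beta> n)" "signal_sets \<beta> n \<noteq> {}"
proof -
  have "signal_sets \<beta> n \<subseteq> Pow {..<n}" unfolding signal_sets_def by auto
  then show "finite (signal_sets \<beta> n)" by (rule finite_subset) simp
  have "{..<n_signals \<beta> n} \<in> signal_sets \<beta> n" unfolding signal_sets_def using assms by auto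
  then show "signal_sets \<beta> n \<noteq> {}" by auto
qed

lemma FDR_FNR_nonneg: "n_signals \<beta> n \<le> n \<Longrightarrow> FDR_BC \<beta> r n q \<ge> 0 \<and> FNR_BC \<beta> r n q \<ge> 0"
  unfolding FDR_BC_def FNR_BC_def
  by (intro conjI pmf_exp_ge0 signal_sets_ok integral_nonneg_AE AE_I2 FDP_ge0 FNP_ge0)


lemma per_n:
  fixes \<beta> r q \<epsilon> :: real and n :: nat
  assumes \<beta>: "0 < \<beta>" "\<beta> < 1" and r: "\<beta> < r" and q: "0 < q" "q < 1" and \<epsilon>: "\<epsilon> > 0"
    and n: "n \<ge> 3"
    and h1: "2 * q \<le> \<epsilon>"
    and h2: "real n powr (- (sqrt r - sqrt ((\<beta> + r)/2))\<^sup>2) \<le> 1/4"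
    and h2': "real n powr (- (sqrt r - sqrt ((\<beta> + r)/2))\<^sup>2) \<le> \<epsilon>"
    and h3: "q * real n powr (1 - \<beta>) \<ge> 32 / \<epsilon>"
    and h3': "q * real n powr (1 - \<beta>) \<ge> 16"
    and h4: "q * real n powr ((\<beta> + r)/2 - \<beta>) \<ge> 16"
    and h5: "real n powr (1 - \<beta>) \<ge> 64 / \<epsilon>" "real n powr (1 - \<beta>) \<ge> 8 / \<epsilon>" "real n powr (1 - \<beta>) \<ge> 2"
    and h6: "(ln (real n) / ln (3/2) + 2) / real n powr (1 - \<beta>) \<le> \<epsilon>\<^sup>2 / 128"
  shows "FDR_BC \<beta> r n q + FNR_BC \<beta> r n q \<le> 6 * \<epsilon>"
proof -
  define s where "s = (\<beta> + r) / 2"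
  have s: "\<beta> < s" "s < r" "0 < s" unfolding s_def using \<beta> r by auto
  define x where "x = real n powr (1 - \<beta>)"
  define c where "c = (sqrt r - sqrt s)\<^sup>2"
  define m where "m = n_signals \<beta> n"
  have npos: "real n > 0" using n by simp
  have xpos: "x > 0" unfolding x_def using npos by simp
  have mx: "real m \<ge> x - 1" unfolding m_def n_signals_def x_def[symmetric] by linarith
  have mx2: "real m \<ge> x / 2" using mx h5(3) unfolding x_def by simp
  have mpos: "m > 0" using mx2 xpos by simp
  have mn: "m \<le> n"
  proof -
    have "x \<le> real n powr 1" unfolding x_def using n \<beta> by (intro powr_mono) auto
    then have "x \<le> real n" using npos by simp
    then show ?thesis unfolding m_def n_signals_def x_def[symmetric] by (simp add: nat_le_iff floor_le_iff)
  qed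
  define L where "L = ln (real n)"
  have Lpos: "L > 0" unfolding L_def using n by simp
  define t0 where "t0 = sqrt (2 * s * L)"
  define \<mu>0 where "\<mu>0 = sqrt (2 * r * L)"
  have t0: "0 \<le> t0" "t0 \<le> \<mu>0" unfolding t0_def \<mu>0_def using s Lpos by auto
  have sqrtfac: "sqrt (2 * a * L) = sqrt a * sqrt (2 * L)" for a by (simp add: real_sqrt_mult mult.commute mult.left_commute)
  define p where "p = G (\<mu>0 - t0)"
  have p0: "p \<ge> 0" unfolding p_def by (rule G_nonneg)
  have pc: "p \<le> real n powr (- c)"
  proof -
    have d: "\<mu>0 - t0 = (sqrt r - sqrt s) * sqrt (2 * L)" unfolding \<mu>0_def t0_def sqrtfac by (simp add: algebra_simps)
    have "p \<le> exp (- (\<mu>0 - t0)\<^sup>2 / 2)" unfolding p_def using t0 by (intro G_tail) simp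
    also have "- (\<mu>0 - t0)\<^sup>2 / 2 = - c * L" unfolding d c_def using Lpos by (simp add: power_mult_distrib)
    also have "exp (- c * L) = real n powr (- c)" unfolding L_def using npos by (simp add: powr_def)
    finally show ?thesis .
  qed
  have hp: "p \<le> 1/4" using pc h2 unfolding c_def s_def by simp
  have hpe: "p \<le> \<epsilon>" using pc h2' unfolding c_def s_def by simp
  have Gt0: "G t0 \<le> real n powr (- s)"
  proof -
    have "G t0 \<le> exp (- t0\<^sup>2 / 2)" using t0 by (intro G_tail) simp
    also have "- t0\<^sup>2 / 2 = - s * L" unfolding t0_def using s Lpos by simp
    also have "exp (- s * L) = real n powr (- s)" unfolding L_def using npos by (simp add: powr_def)
    finally show ?thesis .
  qed
  have hG: "real n * G t0 \<le> q * m / 8"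
  proof -
    have "real n * G t0 \<le> real n powr 1 * real n powr (- s)" using Gt0 npos by simp
    also have "\<dots> = real n powr (1 - s)" using npos by (simp add: powr_diff powr_minus divide_inverse)
    also have "\<dots> * 16 \<le> real n powr (1 - s) * (q * real n powr (s - \<beta>))"
      using h4 unfolding s_def by (intro mult_left_mono) auto
    also have "\<dots> = q * x" unfolding x_def by (simp add: powr_add[symmetric] mult.left_commute)
    also have "\<dots> \<le> 2 * (q * m)" using mx2 q by (simp add: mult_left_mono)
    finally show ?thesis by (simp add: mult_right_mono)
  qed
  have hqm: "8 \<le> q * m"
  proof -
    have "q * x / 2 \<le> q * m" using mx2 q by (simp add: mult_left_mono)
    then show ?thesis using h3' unfolding x_def by simp
  qed
  define K where "K = nat \<lceil>L / ln (3/2)\<rceil>"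
  have ln32: "ln (3/2::real) > 0" by simp
  have y0: "L / ln (3/2) \<ge> 0" using Lpos ln32 by simp
  have Kc: "real K = real_of_int \<lceil>L / ln (3/2)\<rceil>" unfolding K_def using y0 by simp
  have K1: "real K \<ge> L / ln (3/2)" unfolding Kc by simp
  have K2: "real K \<le> L / ln (3/2) + 1" unfolding Kc using ceiling_correct[of "L / ln (3/2)"] by linarith
  have hK: "real n * (2/3)^K \<le> \<epsilon> * m / 4"
  proof -
    have "L \<le> real K * ln (3/2)" using K1 ln32 by (simp add: divide_simps)
    then have "exp L \<le> exp (real K * ln (3/2))" by simp
    also have "\<dots> = (3/2)^K" by (simp add: exp_of_nat_mult)
    finally have "real n \<le> (3/2)^K" unfolding L_def using npos by simp
    then have "real n * (2/3)^K \<le> (3/2)^K * (2/3)^K" by (simp add: mult_right_mono)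
    also have "\<dots> = 1" by (simp add: power_mult_distrib[symmetric])
    also have "1 \<le> \<epsilon> * m / 4"
    proof -
      have "\<epsilon> * x / 2 \<ge> 4" using h5(2) \<epsilon> unfolding x_def by (simp add: divide_simps mult.commute)
      moreover have "\<epsilon> * x / 2 \<le> \<epsilon> * m" using mx2 \<epsilon> by (simp add: mult_left_mono)
      ultimately show ?thesis by simp
    qed
    finally show ?thesis .
  qed
  define Pb where "Pb = 16 * G (\<mu>0 - t0) / m + 8 / (q * m) + 32 * (real K + 1) / (\<epsilon> * m)"
  have bound: "(\<integral>x. FDP (BC_rej n q x) F \<partial>X_law r n F) \<le> 2*q + \<epsilon> + Pb \<and>
               (\<integral>x. FNP (BC_rej n q x) F \<partial>X_law r n F) \<le> p + Pb" if F: "F \<in> signal_sets \<beta> n" for F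
  proof -
    have F': "F \<subseteq> {..<n}" "card F = m" using F unfolding signal_sets_def m_def by auto
    have hmu: "means r n F i = (if i \<in> F then \<mu>0 else 0)" for i unfolding means_def \<mu>0_def L_def by simp
    note cr = core[OF F' mpos hmu q(1) t0, folded p_def, OF hp hG hqm \<epsilon> hK]
    show ?thesis unfolding X_law_def Pb_def p_def[symmetric] using cr by simp
  qed
  note ss = signal_sets_ok[of \<beta> n, folded m_def, OF mn]
  have FDR: "FDR_BC \<beta> r n q \<le> 2*q + \<epsilon> + Pb" unfolding FDR_BC_def
    by (rule pmf_exp_le[OF ss]) (use bound in auto)
  have FNR: "FNR_BC \<beta> r n q \<le> p + Pb" unfolding FNR_BC_def
    by (rule pmf_exp_le[OF ss]) (use bound in auto)
  have mpos': "real m > 0" using mpos by simp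
  have t1: "2 * (16 * p / m) \<le> \<epsilon>"
  proof -
    have "2 * (16 * p / m) \<le> 2 * (16 * 1 / (x/2))" using hp p0 mx2 xpos mpos'
      by (intro mult_left_mono frac_le) auto
    also have "\<dots> = 64 / x" by simp
    also have "\<dots> \<le> \<epsilon>" using h5(1) xpos \<epsilon> unfolding x_def[symmetric] by (simp add: divide_simps mult.commute)
    finally show ?thesis .
  qed
  have t2: "2 * (8 / (q * m)) \<le> \<epsilon>"
  proof -
    have "2 * (8 / (q * m)) \<le> 2 * (8 / (q * (x / 2)))" using q mx2 xpos mpos'
      by (intro mult_left_mono divide_left_mono mult_pos_pos mult_left_mono) auto
    also have "\<dots> = 32 / (q * x)" by simp
    also have "\<dots> \<le> \<epsilon>" using h3 xpos \<epsilon> q unfolding x_def[symmetric] by (simp add: divide_simps mult.commute)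
    finally show ?thesis .
  qed
  have t3: "2 * (32 * (real K + 1) / (\<epsilon> * m)) \<le> \<epsilon>"
  proof -
    have "2 * (32 * (real K + 1) / (\<epsilon> * m)) \<le> 2 * (32 * (L / ln (3/2) + 2) / (\<epsilon> * (x/2)))"
      using K2 \<epsilon> mx2 xpos mpos' Lpos ln32
      by (intro mult_left_mono frac_le mult_pos_pos mult_left_mono) auto
    also have "\<dots> = 128 / \<epsilon> * ((L / ln (3/2) + 2) / x)" by (simp add: field_simps)
    also have "\<dots> \<le> 128 / \<epsilon> * (\<epsilon>\<^sup>2 / 128)" using h6 \<epsilon> unfolding L_def x_def by (intro mult_left_mono) auto
    also have "\<dots> = \<epsilon>" using \<epsilon> by (simp add: power2_eq_square)
    finally show ?thesis .
  qed
  have "FDR_BC \<beta> r n q + FNR_BC \<beta> r n q \<le> 2*q + \<epsilon> + p + 2 * Pb" using FDR FNR by simp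
  also have "\<dots> \<le> 6 * \<epsilon>" using t1 t2 t3 h1 hpe unfolding Pb_def p_def by simp
  finally show ?thesis .
qed



lemma n_signals_le: assumes "0 < \<beta>" "\<beta> < 1" shows "n_signals \<beta> n \<le> n"
proof (cases "n = 0")
  case True then show ?thesis unfolding n_signals_def by simp
next
  case False
  then have "real n powr (1 - \<beta>) \<le> real n powr 1" using assms by (intro powr_mono) auto
  then have "real n powr (1 - \<beta>) \<le> real n" using False by simp
  then show ?thesis unfolding n_signals_def by (simp add: nat_le_iff floor_le_iff)
qed

theorem corollary3:
  fixes \<beta> r :: real and q :: "nat \<Rightarrow> real"
  assumes "0 < \<beta>" "\<beta> < 1" "r > \<beta>"
    and "\<And>n. 0 < q n \<and> q n < 1"
    and "q \<longlonglongrightarrow> 0"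
    and "\<And>a. a > 0 \<Longrightarrow> filterlim (\<lambda>n. real n powr a * q n) at_top sequentially"
  shows "(\<lambda>n. FDR_BC \<beta> r n (q n) + FNR_BC \<beta> r n (q n)) \<longlonglongrightarrow> 0"
proof -
  note \<beta> = assms(1,2) and r = assms(3) and qb = assms(4) and q0 = assms(5) and qa = assms(6)
  define s where "s = (\<beta> + r) / 2"
  have s: "\<beta> < s" "s < r" "0 < s" unfolding s_def using \<beta> r by auto
  define c where "c = (sqrt r - sqrt s)\<^sup>2"
  have "sqrt s < sqrt r" using s by simp
  then have cpos: "c > 0" unfolding c_def by simp
  have a1: "1 - \<beta> > 0" using \<beta> by simp
  have a2: "s - \<beta> > 0" using s by simp
  have L1: "((\<lambda>n::nat. real n powr (- c)) \<longlongrightarrow> 0) sequentially" using cpos by real_asymp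
  have L4: "filterlim (\<lambda>n::nat. real n powr (1 - \<beta>)) at_top sequentially" using a1 by real_asymp
  have L5: "((\<lambda>n::nat. (ln (real n) / ln (3/2) + 2) / real n powr (1 - \<beta>)) \<longlongrightarrow> 0) sequentially"
    using a1 by real_asymp
  have L2: "filterlim (\<lambda>n. real n powr (1 - \<beta>) * q n) at_top sequentially" by (rule qa[OF a1])
  have L3: "filterlim (\<lambda>n. real n powr (s - \<beta>) * q n) at_top sequentially" by (rule qa[OF a2])
  have nonneg: "FDR_BC \<beta> r n (q n) + FNR_BC \<beta> r n (q n) \<ge> 0" for n
    using FDR_FNR_nonneg[OF n_signals_le[OF \<beta>]] by (simp add: add_nonneg_nonneg)
  show ?thesis unfolding tendsto_iff
  proof (intro allI impI)
    fix e :: real assume e: "e > 0"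
    define \<epsilon> where "\<epsilon> = e / 7"
    have \<epsilon>: "\<epsilon> > 0" unfolding \<epsilon>_def using e by simp
    have E0: "eventually (\<lambda>n. n \<ge> 3) sequentially" by (rule eventually_ge_at_top)
    have E1: "eventually (\<lambda>n. q n < \<epsilon> / 2) sequentially" by (rule order_tendstoD(2)[OF q0]) (use \<epsilon> in simp)
    have E2: "eventually (\<lambda>n. real n powr (- c) < min (1/4) \<epsilon>) sequentially"
      by (rule order_tendstoD(2)[OF L1]) (use \<epsilon> in simp)
    have E3: "eventually (\<lambda>n. max 16 (32 / \<epsilon>) \<le> real n powr (1 - \<beta>) * q n) sequentially"
      using L2 unfolding filterlim_at_top by blast
    have E4: "eventually (\<lambda>n. 16 \<le> real n powr (s - \<beta>) * q n) sequentially"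
      using L3 unfolding filterlim_at_top by blast
    have E5: "eventually (\<lambda>n. max (max (64 / \<epsilon>) (8 / \<epsilon>)) 2 \<le> real n powr (1 - \<beta>)) sequentially"
      using L4 unfolding filterlim_at_top by blast
    have E6: "eventually (\<lambda>n. (ln (real n) / ln (3/2) + 2) / real n powr (1 - \<beta>) < \<epsilon>\<^sup>2 / 128) sequentially"
      by (rule order_tendstoD(2)[OF L5]) (use \<epsilon> in simp)
    have "eventually (\<lambda>n. FDR_BC \<beta> r n (q n) + FNR_BC \<beta> r n (q n) \<le> 6 * \<epsilon>) sequentially"
      using E0 E1 E2 E3 E4 E5 E6
    proof eventually_elim
      case (elim n)
      show ?case
      proof (rule per_n[OF \<beta> r _ _ \<epsilon> elim(1)])
        show "0 < q n" "q n < 1" using qb by auto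
        show "2 * q n \<le> \<epsilon>" using elim(2) by simp
        show "real n powr - (sqrt r - sqrt ((\<beta> + r) / 2))\<^sup>2 \<le> 1 / 4"
          using elim(3) unfolding c_def s_def by simp
        show "real n powr - (sqrt r - sqrt ((\<beta> + r) / 2))\<^sup>2 \<le> \<epsilon>"
          using elim(3) unfolding c_def s_def by simp
        show "32 / \<epsilon> \<le> q n * real n powr (1 - \<beta>)" using elim(4) by (simp add: mult.commute)
        show "16 \<le> q n * real n powr (1 - \<beta>)" using elim(4) by (simp add: mult.commute)
        show "16 \<le> q n * real n powr ((\<beta> + r) / 2 - \<beta>)" using elim(5) unfolding s_def by (simp add: mult.commute)
        show "64 / \<epsilon> \<le> real n powr (1 - \<beta>)" "8 / \<epsilon> \<le> real n powr (1 - \<beta>)" "2 \<le> real n powr (1 - \<beta>)"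
          using elim(6) by auto
        show "(ln (real n) / ln (3 / 2) + 2) / real n powr (1 - \<beta>) \<le> \<epsilon>\<^sup>2 / 128" using elim(7) by simp
      qed
    qed
    then show "eventually (\<lambda>n. dist (FDR_BC \<beta> r n (q n) + FNR_BC \<beta> r n (q n)) 0 < e) sequentially"
    proof (rule eventually_mono)
      fix n assume "FDR_BC \<beta> r n (q n) + FNR_BC \<beta> r n (q n) \<le> 6 * \<epsilon>"
      then show "dist (FDR_BC \<beta> r n (q n) + FNR_BC \<beta> r n (q n)) 0 < e"
        using nonneg[of n] e unfolding \<epsilon>_def by (simp add: dist_real_def)
    qed
  qed
qed


end
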